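(* Let $p(x)\in\mathbb{C}((x))$ and set $\phi(x,z)=e^{zp(x)\frac{d}{dx}}x=\sum_{n\ge0}\frac{z^n}{n!}\left(p(x)\frac{d}{dx}\right)^nx\in\mathbb{C}((x))[[z]]$. Then $\phi(x,z)$ is an associate of the additive formal group $F(x,y)=x+y$. Moreover, every associate $\phi(x,z)$ of $F(x,y)=x+y$ is of this form, with $p(x)$ uniquely determined (namely $p(x)=\frac{\partial\phi}{\partial z}(x,0)$).
   Context: An associate of the one-dimensional additive formal group $F(x,y)=x+y$ is a formal series $\phi(x,z)\in\mathbb{C}((x))[[z]]$ such that $\phi(x,0)=x$ and $\phi(\phi(x,x_2),x_0)=\phi(x,x_0+x_2)$, where, writing $\phi(x,z)=\sum_{n\ge0}f_n(x)z^n$, $\phi(\phi(x,x_2),x_0):=\sum_n f_n(\phi(x,x_2))x_0^n\in\mathbb{C}((x))[[x_0,x_2]]$ (for $f\in\mathbb{C}((x))$, $f(\phi(x,x_2))$ is defined using that $\phi(x,x_2)$ is a unit of $\mathbb{C}((x))[[x_2]]$). *)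

theory Defs
  imports "HOL-Computational_Algebra.Formal_Laurent_Series"
begin

text \<open>C((x)) is the type complex fls (formal Laurent series in x);
  C((x))[[z]] is the type complex fls fps (power series in z with coefficients in C((x))).
  For phi :: complex fls fps, fps_nth phi n is the coefficient f_n(x) of z^n.\<close>

text \<open>Coefficient of x^j x2^m in f(psi(x,x2)), where f = sum_k a_k x^k is a Laurent series
  and psi is a unit of C((x))[[x2]]; f(psi) = sum_k a_k psi^k (psi^k for negative k taken
  in C((x))[[x2]] via the inverse of the unit psi).  For fixed m and j only finitely many k
  contribute (x-adic convergence), so the coefficient is the finite sum over the support.\<close>
definition subst_coeff :: "complex fls \<Rightarrow> complex fls fps \<Rightarrow> nat \<Rightarrow> int \<Rightarrow> complex" where
  "subst_coeff f psi m j =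
     (\<Sum>k\<in>{k::int. fls_nth f k * fls_nth (fps_nth (psi powi k) m) j \<noteq> 0}.
        fls_nth f k * fls_nth (fps_nth (psi powi k) m) j)"

text \<open>phi is an associate of F(x,y) = x + y: phi(x,0) = x and
  phi(phi(x,x2),x0) = phi(x,x0+x2) in C((x))[[x0,x2]], compared coefficientwise:
  the coefficient of x0^n0 x2^n2 on the left is f_n0(phi(x,x2)) at x2^n2, and on the
  right (sum_n f_n (x0+x2)^n) it is binom(n0+n2,n0) f_(n0+n2).\<close>
definition additive_associate :: "complex fls fps \<Rightarrow> bool" where
  "additive_associate phi \<longleftrightarrow>
     fps_nth phi 0 = fls_X \<and>
     (\<forall>n0 n2 :: nat. \<forall>j :: int.
        subst_coeff (fps_nth phi n0) phi n2 j =
        of_nat ((n0 + n2) choose n0) * fls_nth (fps_nth phi (n0 + n2)) j)"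

definition exp_vf :: "complex fls \<Rightarrow> complex fls fps" where
  "exp_vf p = Abs_fps (\<lambda>n. ((\<lambda>g. p * fls_deriv g) ^^ n) fls_X / of_nat (fact n))"

end

theory Submission
  imports Defs
begin

unbundle fps_syntax
notation fls_nth (infixl \<open>$$\<close> 75)

definition Dn :: "complex fls \<Rightarrow> nat \<Rightarrow> complex fls \<Rightarrow> complex fls" where
  "Dn p n = (\<lambda>g. p * fls_deriv g) ^^ n"

lemma Dn_0[simp]: "Dn p 0 g = g" by (simp add: Dn_def)
lemma Dn_Suc: "Dn p (Suc n) g = p * fls_deriv (Dn p n g)" by (simp add: Dn_def)
lemma Dn_Suc': "Dn p (Suc n) g = Dn p n (p * fls_deriv g)"
  by (simp add: Dn_def funpow_Suc_right del: funpow.simps)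
lemma Dn_add: "Dn p (m+n) g = Dn p m (Dn p n g)"
  by (simp add: Dn_def funpow_add)
lemma Dn_zero[simp]: "Dn p n 0 = 0" by (induct n) (simp_all add: Dn_Suc)
lemma Dn_plus: "Dn p n (f+g) = Dn p n f + Dn p n g"
  by (induct n) (simp_all add: Dn_Suc algebra_simps)
lemma Dn_const: "Dn p n (fls_const c * f) = fls_const c * Dn p n f"
  by (induct n) (simp_all add: Dn_Suc algebra_simps)
lemma Dn_sum: "Dn p n (sum f S) = (\<Sum>i\<in>S. Dn p n (f i))"
  by (induct S rule: infinite_finite_induct) (simp_all add: Dn_plus)
lemma Dn_one: "Dn p (Suc n) 1 = 0" by (simp add: Dn_Suc')

definition Sx :: "complex fls \<Rightarrow> complex fls \<Rightarrow> complex fls fps" where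
  "Sx p f = Abs_fps (\<lambda>n. fls_const (inverse (of_nat (fact n))) * Dn p n f)"

lemma Sx_nth: "Sx p f $ n = fls_const (inverse (of_nat (fact n))) * Dn p n f"
  by (simp add: Sx_def)

lemma div_fact_conv: "(g::complex fls) / of_nat k = fls_const (inverse (of_nat k)) * g"
  by (simp add: fls_of_nat divide_inverse fls_inverse_const mult.commute)

lemma div_fact_conv': "(g::complex fls) / fact k = fls_const (inverse (fact k)) * g"
  using div_fact_conv[of g "fact k"] by simp

lemma exp_vf_Sx: "exp_vf p = Sx p fls_X"
  by (rule fps_ext) (simp add: exp_vf_def Sx_nth Dn_def div_fact_conv')

definition Mf :: "complex fls \<Rightarrow> complex fls fps \<Rightarrow> complex fls fps" where
  "Mf p A = Abs_fps (\<lambda>n. p * fls_deriv (A $ n))"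

lemma Mf_mult: "Mf p (A * B) = Mf p A * B + A * Mf p B"
  by (rule fps_ext) (simp add: Mf_def fps_mult_nth fls_deriv_sum sum_distrib_left
      sum.distrib[symmetric] distrib_left mult.assoc mult.left_commute[of p] add.commute)

lemma Sx_deriv: "fps_deriv (Sx p f) = Mf p (Sx p f)"
proof (rule fps_ext)
  fix n
  have e: "of_nat (Suc n) * inverse (of_nat (fact (Suc n))) = (inverse (of_nat (fact n)) :: complex)"
    by (simp only: fact_Suc of_nat_mult inverse_mult_distrib mult.assoc[symmetric]) (simp del: of_nat_Suc)
  have "fps_deriv (Sx p f) $ n = fls_const (of_nat (Suc n) * inverse (of_nat (fact (Suc n)))) * (p * fls_deriv (Dn p n f))"
    by (simp add: Sx_nth Dn_Suc fls_of_nat mult.assoc del: of_nat_Suc fact_Suc)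
  also have "\<dots> = Mf p (Sx p f) $ n"
    by (simp only: e) (simp add: Mf_def Sx_nth algebra_simps)
  finally show "fps_deriv (Sx p f) $ n = Mf p (Sx p f) $ n" .
qed

lemma Sx_unique:
  assumes d: "fps_deriv A = Mf p A"
  shows "A = Sx p (A$0)"
proof (rule fps_ext)
  fix n show "A $ n = Sx p (A$0) $ n"
  proof (induct n)
    case 0 then show ?case by (simp add: Sx_nth)
  next
    case (Suc n)
    have "fps_deriv A $ n = Mf p A $ n" using d by simp
    hence e: "fls_const (of_nat (Suc n)) * A $ Suc n = p * fls_deriv (A $ n)"
      by (simp add: Mf_def fls_of_nat del: of_nat_Suc)
    have "A $ Suc n = fls_const (inverse (of_nat (Suc n))) * (fls_const (of_nat (Suc n)) * A $ Suc n)"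
      by (simp add: mult.assoc[symmetric] del: of_nat_Suc)
    also have "\<dots> = fls_const (inverse (of_nat (Suc n))) * (p * fls_deriv (A $ n))"
      by (simp only: e)
    also have "\<dots> = fls_const (inverse (of_nat (Suc n)) * inverse (of_nat (fact n))) * (p * fls_deriv (Dn p n (A$0)))"
      by (simp only: Suc Sx_nth) (simp add: mult.assoc mult.left_commute del: of_nat_Suc, simp add: mult.commute)
    also have "\<dots> = Sx p (A$0) $ Suc n"
      by (simp only: Sx_nth Dn_Suc fact_Suc of_nat_mult inverse_mult_distrib of_nat_id)
    finally show ?case .
  qed
qed

lemma Sx_mult: "Sx p (f*g) = Sx p f * Sx p g"
proof -
  have "Sx p f * Sx p g = Sx p ((Sx p f * Sx p g)$0)"
    by (rule Sx_unique) (simp add: Sx_deriv Mf_mult add.commute)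
  also have "(Sx p f * Sx p g)$0 = f * g" by (simp add: Sx_nth)
  finally show ?thesis by simp
qed

lemma Sx_1: "Sx p 1 = 1"
proof (rule fps_ext)
  fix n show "Sx p 1 $ n = 1 $ n"
    by (cases n) (simp_all add: Sx_nth Dn_one)
qed

lemma Sx_power: "Sx p (f^n) = (Sx p f)^n"
  by (induct n) (simp_all add: Sx_1 Sx_mult)

lemma Sx_inverse: assumes "f \<noteq> 0" shows "Sx p (inverse f) = inverse (Sx p f)"
proof -
  have "Sx p f * Sx p (inverse f) = 1" using assms by (simp add: Sx_mult[symmetric] Sx_1)
  from fps_inverse_unique[OF this] show ?thesis by simp
qed

lemma Sx_powi: assumes "f \<noteq> 0" shows "Sx p (f powi k) = (Sx p f) powi k"
  using assms by (simp add: power_int_def Sx_power Sx_inverse)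

definition vb :: "int \<Rightarrow> complex fls \<Rightarrow> bool" where
  "vb N f \<longleftrightarrow> (\<forall>i<N. f $$ i = 0)"

lemma vb_D: assumes "vb N f" shows "vb (N + fls_subdegree p - 1) (p * fls_deriv f)"
  unfolding vb_def
proof (intro allI impI)
  fix i assume i: "i < N + fls_subdegree p - 1"
  have vd: "\<And>k. k < N - 1 \<Longrightarrow> fls_deriv f $$ k = 0"
    using assms by (simp add: vb_def)
  show "(p * fls_deriv f) $$ i = 0"
  proof (cases "fls_deriv f = 0")
    case True then show ?thesis by simp
  next
    case False
    have "N - 1 \<le> fls_subdegree (fls_deriv f)"
      by (rule fls_subdegree_geI[OF False vd])
    with i show ?thesis by (intro fls_times_nth_eq0) simp
  qed
qed

lemma vb_Dn: "vb N f \<Longrightarrow> vb (N + int n * (fls_subdegree p - 1)) (Dn p n f)"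
proof (induct n)
  case 0 then show ?case by simp
next
  case (Suc n)
  have "vb (N + int n * (fls_subdegree p - 1) + fls_subdegree p - 1) (Dn p (Suc n) f)"
    unfolding Dn_Suc by (rule vb_D[OF Suc(1)[OF Suc(2)]])
  then show ?case by (simp add: algebra_simps)
qed

lemma vb_X: "vb k (fls_X powi k)"
  by (simp add: vb_def)

lemma coeff_sum:
  fixes f p :: "complex fls" and m :: nat and j :: int
  defines "N \<equiv> j - int m * (fls_subdegree p - 1)"
  shows "Dn p m f $$ j = (\<Sum>k\<in>{fls_subdegree f..N}. f $$ k * (Dn p m (fls_X powi k) $$ j))"
proof -
  define P where "P = (\<Sum>k\<in>{fls_subdegree f..N}. fls_const (f $$ k) * fls_X powi k)"
  define R where "R = f - P"
  have PR: "f = P + R" by (simp add: R_def)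
  have "vb (N+1) R"
    unfolding vb_def
  proof (intro allI impI)
    fix i assume i: "i < N + 1"
    have "P $$ i = (\<Sum>k\<in>{fls_subdegree f..N}. f $$ k * (if i = k then 1 else 0))"
      unfolding P_def fls_nth_sum by (intro sum.cong) auto
    also have "\<dots> = (\<Sum>k\<in>{fls_subdegree f..N}. if k = i then f $$ i else 0)"
      by (intro sum.cong) auto
    also have "\<dots> = (if fls_subdegree f \<le> i \<and> i \<le> N then f $$ i else 0)"
      by (simp add: sum.delta)
    also have "\<dots> = f $$ i" using i by (auto simp: nth_less_subdegree_zero)
    finally show "R $$ i = 0" by (simp add: R_def)
  qed
  hence "vb (N + 1 + int m * (fls_subdegree p - 1)) (Dn p m R)" by (rule vb_Dn)
  hence "Dn p m R $$ j = 0" by (simp add: vb_def N_def)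
  moreover have "Dn p m P $$ j = (\<Sum>k\<in>{fls_subdegree f..N}. f $$ k * (Dn p m (fls_X powi k) $$ j))"
    unfolding P_def Dn_sum Dn_const fls_nth_sum by simp
  moreover have "Dn p m f = Dn p m P + Dn p m R" by (metis PR Dn_plus)
  hence "Dn p m f $$ j = Dn p m P $$ j + Dn p m R $$ j" by simp
  ultimately show ?thesis by simp
qed

lemma subst_Sx:
  "subst_coeff f (Sx p fls_X) m j = Dn p m f $$ j * inverse (of_nat (fact m))"
proof -
  define N where "N = j - int m * (fls_subdegree p - 1)"
  define c where "c k = Dn p m (fls_X powi k) $$ j" for k
  have ck: "fls_nth (fps_nth (Sx p fls_X powi k) m) j = inverse (of_nat (fact m)) * c k" for k
    by (simp add: Sx_powi[symmetric] Sx_nth c_def del: fls_X_power_int)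
  have cz: "c k = 0" if "N < k" for k
  proof -
    have "vb (k + int m * (fls_subdegree p - 1)) (Dn p m (fls_X powi k))"
      by (rule vb_Dn[OF vb_X])
    then show ?thesis using that by (simp add: vb_def c_def N_def)
  qed
  let ?T = "{k. f $$ k * fls_nth (fps_nth (Sx p fls_X powi k) m) j \<noteq> 0}"
  have sub: "?T \<subseteq> {fls_subdegree f..N}"
  proof
    fix k assume "k \<in> ?T"
    hence "f $$ k \<noteq> 0" "c k \<noteq> 0" by (auto simp: ck)
    thus "k \<in> {fls_subdegree f..N}"
      using cz by (force simp: nth_less_subdegree_zero intro: fls_subdegree_leI)
  qed
  have "subst_coeff f (Sx p fls_X) m j = (\<Sum>k\<in>?T. f $$ k * fls_nth (fps_nth (Sx p fls_X powi k) m) j)"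
    by (simp add: subst_coeff_def)
  also have "\<dots> = (\<Sum>k\<in>{fls_subdegree f..N}. f $$ k * fls_nth (fps_nth (Sx p fls_X powi k) m) j)"
    by (rule sum.mono_neutral_left[OF _ sub]) auto
  also have "\<dots> = (\<Sum>k\<in>{fls_subdegree f..N}. f $$ k * c k) * inverse (of_nat (fact m))"
    by (simp only: ck sum_distrib_right) (simp add: mult.commute mult.left_commute)
  also have "\<dots> = Dn p m f $$ j * inverse (of_nat (fact m))"
    using coeff_sum[of p m f j] by (simp add: c_def N_def)
  finally show ?thesis .
qed


lemma exp_vf_nth0: "exp_vf p $ 0 = fls_X" by (simp add: exp_vf_Sx Sx_nth)
lemma exp_vf_nth1: "exp_vf p $ 1 = p" by (simp add: exp_vf_Sx Sx_nth Dn_Suc)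
lemma exp_vf_nth1': "exp_vf p $ Suc 0 = p" using exp_vf_nth1 by simp

lemma binom_key:
  "of_nat ((n0+n2) choose n0) * inverse (fact (n0+n2)) = (inverse (fact n0) * inverse (fact n2) :: complex)"
proof -
  have "fact n0 * fact n2 * ((n0+n2) choose n0) = (fact (n0+n2) :: nat)"
    using binomial_fact_lemma[of n0 "n0+n2"] by simp
  hence "(fact n0 * fact n2 * of_nat ((n0+n2) choose n0) :: complex) = fact (n0+n2)"
    by (metis of_nat_fact of_nat_mult)
  thus ?thesis by (simp add: field_simps)
qed

lemma part1: "additive_associate (exp_vf p)"
  unfolding additive_associate_def
proof (intro conjI allI)
  show "exp_vf p $ 0 = fls_X" by (rule exp_vf_nth0)
  fix n0 n2 :: nat and j :: int
  have "subst_coeff (exp_vf p $ n0) (exp_vf p) n2 j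
      = Dn p n2 (fls_const (inverse (fact n0)) * Dn p n0 fls_X) $$ j * inverse (fact n2)"
    by (simp add: exp_vf_Sx subst_Sx Sx_nth)
  also have "\<dots> = inverse (fact n0) * inverse (fact n2) * Dn p (n0+n2) fls_X $$ j"
    by (simp add: Dn_const Dn_add[symmetric] add.commute)
  also have "\<dots> = of_nat ((n0+n2) choose n0) * inverse (fact (n0+n2)) * Dn p (n0+n2) fls_X $$ j"
    by (simp only: binom_key)
  also have "\<dots> = of_nat ((n0+n2) choose n0) * exp_vf p $ (n0 + n2) $$ j"
    by (simp add: exp_vf_Sx Sx_nth)
  finally show "subst_coeff (exp_vf p $ n0) (exp_vf p) n2 j =
        of_nat ((n0+n2) choose n0) * exp_vf p $ (n0 + n2) $$ j" .
qed

lemma agree_pow: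
  fixes A B :: "'a::comm_ring_1 fps"
  assumes "A$0 = B$0" "A$1 = B$1"
  shows "(A^n)$0 = (B^n)$0 \<and> (A^n)$1 = (B^n)$1"
  using assms by (induct n) (simp_all add: fps_mult_nth_1)

lemma agree_inv:
  fixes A B :: "'a::field fps"
  assumes "A$0 = B$0" "A$1 = B$1" "A$0 \<noteq> 0"
  shows "(inverse A)$0 = (inverse B)$0 \<and> (inverse A)$1 = (inverse B)$1"
proof -
  have gen: "(inverse C)$1 = - (inverse C $ 0 * C$1) / C$0" if "C$0 \<noteq> 0" for C :: "'a fps"
  proof -
    have "(inverse C * C) $ 1 = 0" using inverse_mult_eq_1[OF that] by simp
    hence "inverse C $ 0 * C$1 + inverse C $ 1 * C$0 = 0" by (simp add: fps_mult_nth_1)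
    thus ?thesis using that by (simp add: field_simps add_eq_0_iff2)
  qed
  show ?thesis using assms gen[of A] gen[of B] by simp
qed

lemma agree_powi:
  fixes A B :: "'a::field fps"
  assumes "A$0 = B$0" "A$1 = B$1" "A$0 \<noteq> 0"
  shows "(A powi k)$1 = (B powi k)$1"
proof (cases "0 \<le> k")
  case True then show ?thesis using agree_pow[OF assms(1,2)] by (simp add: power_int_def)
next
  case False
  from agree_inv[OF assms] have "inverse A $ 0 = inverse B $ 0" "inverse A $ 1 = inverse B $ 1" by auto
  from agree_pow[OF this] False show ?thesis by (simp add: power_int_def)
qed

lemma subst_cong1:
  assumes "phi$0 = psi$0" "phi$1 = psi$1" "phi$0 \<noteq> 0"
  shows "subst_coeff f phi 1 j = subst_coeff f psi 1 j"
  unfolding subst_coeff_def using agree_powi[OF assms] by simp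

theorem proposition2p4:
  shows "(\<forall>p :: complex fls. additive_associate (exp_vf p)) \<and>
         (\<forall>phi :: complex fls fps. additive_associate phi \<longrightarrow>
            (\<exists>!p. phi = exp_vf p) \<and> phi = exp_vf (fps_nth (fps_deriv phi) 0))"
proof (intro conjI allI impI)
  fix p :: "complex fls" show "additive_associate (exp_vf p)" by (rule part1)
next
  fix phi :: "complex fls fps"
  assume a: "additive_associate phi"
  define p where "p = phi $ 1"
  have a0: "phi $ 0 = fls_X" using a by (simp add: additive_associate_def)
  have ae: "subst_coeff (phi $ n) phi 1 j = of_nat (Suc n) * phi $ Suc n $$ j" for n j
    using a unfolding additive_associate_def
    by (metis Suc_eq_plus1 binomial_Suc_n)
  have be: "subst_coeff (exp_vf p $ n) (exp_vf p) 1 j = of_nat (Suc n) * exp_vf p $ Suc n $$ j" for n j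
    using part1[of p] unfolding additive_associate_def
    by (metis Suc_eq_plus1 binomial_Suc_n)
  have e: "phi = exp_vf p"
  proof (rule fps_ext)
    fix n show "phi $ n = exp_vf p $ n"
    proof (induct n)
      case 0 show ?case by (simp add: a0 exp_vf_nth0)
    next
      case (Suc n)
      have "phi $ Suc n $$ j = exp_vf p $ Suc n $$ j" for j
      proof -
        have "subst_coeff (phi $ n) phi 1 j = subst_coeff (exp_vf p $ n) (exp_vf p) 1 j"
        proof -
          have h1: "phi $ Suc 0 = exp_vf p $ Suc 0" using exp_vf_nth1[of p] by (simp add: p_def)
          have "subst_coeff (phi $ n) phi 1 j = subst_coeff (phi $ n) (exp_vf p) 1 j"
            by (rule subst_cong1) (simp_all add: a0 exp_vf_nth0 h1)
          thus ?thesis using Suc by simp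
        qed
        hence "(of_nat (Suc n) :: complex) * phi $ Suc n $$ j = of_nat (Suc n) * exp_vf p $ Suc n $$ j"
          by (simp only: ae be)
        thus ?thesis by (simp del: of_nat_Suc)
      qed
      then show ?case by (intro fls_eqI) simp
    qed
  qed
  show "\<exists>!q. phi = exp_vf q"
  proof (rule ex1I[of _ p])
    show "phi = exp_vf p" by (rule e)
    fix q assume "phi = exp_vf q"
    hence "phi $ 1 = q" by (simp add: exp_vf_nth1')
    thus "q = p" by (simp add: p_def)
  qed
  have "fps_deriv phi $ 0 = p" by (simp add: p_def)
  thus "phi = exp_vf (fps_deriv phi $ 0)" using e by simp
qed

end
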